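(* Let $K$ be an algebraically closed field of characteristic zero, $\deg_1$ the weighted degree on $K[x_1,\dots,x_n]$ assigning positive real weights $w_i$ to $x_i$, $\Phi=(f_1,\dots,f_n)$ a polynomial automorphism of $K^n$ with jacobian $\lambda$, $\Phi^{-1}=(g_1,\dots,g_n)$, $d_i=\deg_1(f_i)$, and $\deg_2$ the weighted degree assigning weight $d_i$ to $x_i$. Let $\delta_i(P)=\lambda^{-1}\frac{\partial P}{\partial x_i}$ and $\Delta_i(P)=\mathrm{j}(g_1,\dots,g_{i-1},P,g_{i+1},\dots,g_n)$. Then there exists an index $i$ such that $\deg_2(\Delta_i)\ge\deg_1(\delta_i)=-w_i$.
   Context: $\mathrm{j}$ denotes the jacobian determinant. For a p.w.h. degree $\deg$ and a $K$-derivation $\partial$ of $K[x_1,\dots,x_n]$, $\deg(\partial)=\sup\{\deg(\partial(P))-\deg(P) : P\ne 0\}$ (equal to $-\infty$ iff $\partial=0$). *)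

theory Defs
  imports "HOL-Analysis.Analysis" "HOL-Library.Poly_Mapping"
    "HOL-Computational_Algebra.Polynomial"
begin

text \<open>Polynomials in the variables indexed by the finite type 'n with coefficients in 'a:
  finitely supported maps from monomials (exponent vectors) to coefficients.\<close>
type_synonym ('n, 'a) mpoly = "('n \<Rightarrow>\<^sub>0 nat) \<Rightarrow>\<^sub>0 'a"

definition mvar :: "'n \<Rightarrow> ('n, 'a::comm_ring_1) mpoly" where
  "mvar i = Poly_Mapping.single (Poly_Mapping.single i 1) 1"

definition mconst :: "'a::comm_ring_1 \<Rightarrow> ('n, 'a) mpoly" where
  "mconst c = Poly_Mapping.single 0 c"

definition mpderiv :: "'n \<Rightarrow> ('n, 'a::comm_ring_1) mpoly \<Rightarrow> ('n, 'a) mpoly" where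
  "mpderiv i P = (\<Sum>m\<in>Poly_Mapping.keys P.
      Poly_Mapping.single (m - Poly_Mapping.single i 1) (of_nat (Poly_Mapping.lookup (m::'n \<Rightarrow>\<^sub>0 nat) i) * Poly_Mapping.lookup P m))"

definition msubst :: "('n::finite \<Rightarrow> ('n, 'a::comm_ring_1) mpoly) \<Rightarrow> ('n, 'a) mpoly \<Rightarrow> ('n, 'a) mpoly" where
  "msubst g P = (\<Sum>m\<in>Poly_Mapping.keys P. mconst (Poly_Mapping.lookup P m) * (\<Prod>i\<in>UNIV. g i ^ Poly_Mapping.lookup m i))"

definition jac :: "('n::finite \<Rightarrow> ('n, 'a::comm_ring_1) mpoly) \<Rightarrow> ('n, 'a) mpoly" where
  "jac f = det (\<chi> i k. mpderiv k (f i))"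

definition wdeg :: "('n::finite \<Rightarrow> real) \<Rightarrow> ('n, 'a::zero) mpoly \<Rightarrow> ereal" where
  "wdeg w P = (if P = 0 then -\<infinity>
      else Max ((\<lambda>m. ereal (\<Sum>i\<in>UNIV. w i * real (Poly_Mapping.lookup (m::'n \<Rightarrow>\<^sub>0 nat) i))) ` Poly_Mapping.keys P))"

definition deriv_deg :: "('n::finite \<Rightarrow> real) \<Rightarrow> (('n, 'a::zero) mpoly \<Rightarrow> ('n, 'a) mpoly) \<Rightarrow> ereal" where
  "deriv_deg w D = Sup {wdeg w (D P) - wdeg w P | P. P \<noteq> 0}"

end

theory Submission
  imports Defs
begin

abbreviation ev :: "'n \<Rightarrow> ('n \<Rightarrow>\<^sub>0 nat)" where "ev i \<equiv> Poly_Mapping.single i 1"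

lemma mpoly_expand: "P = (\<Sum>m\<in>Poly_Mapping.keys P. Poly_Mapping.single m (Poly_Mapping.lookup P m))"
proof (rule poly_mapping_eqI)
  fix k
  have "Poly_Mapping.lookup (\<Sum>m\<in>Poly_Mapping.keys P. Poly_Mapping.single m (Poly_Mapping.lookup P m)) k
     = (\<Sum>m\<in>Poly_Mapping.keys P. (if m = k then Poly_Mapping.lookup P m else 0))"
    by (simp add: lookup_sum lookup_single when_def)
  also have "\<dots> = Poly_Mapping.lookup P k"
    by (simp add: in_keys_iff)
  finally show "Poly_Mapping.lookup P k = Poly_Mapping.lookup (\<Sum>m\<in>Poly_Mapping.keys P. Poly_Mapping.single m (Poly_Mapping.lookup P m)) k" by simp
qed

lemma pm_expand_finite: "(m::'n::finite \<Rightarrow>\<^sub>0 nat) = (\<Sum>i\<in>UNIV. Poly_Mapping.single i (Poly_Mapping.lookup m i))"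
proof (rule poly_mapping_eqI)
  fix k
  show "Poly_Mapping.lookup m k = Poly_Mapping.lookup (\<Sum>i\<in>UNIV. Poly_Mapping.single i (Poly_Mapping.lookup m i)) k"
    by (simp add: lookup_sum lookup_single when_def)
qed

lemma lin_ext_superset:
  assumes "\<forall>m. h m 0 = 0" "finite S" "Poly_Mapping.keys P \<subseteq> S"
  shows "(\<Sum>m\<in>Poly_Mapping.keys P. h m (Poly_Mapping.lookup P m)) = (\<Sum>m\<in>S. h m (Poly_Mapping.lookup P m))"
  by (rule sum.mono_neutral_left) (use assms in \<open>auto simp: in_keys_iff\<close>)

lemma lin_ext_add:
  fixes h :: "'k \<Rightarrow> 'b::comm_monoid_add \<Rightarrow> 'c::comm_monoid_add"
  assumes "\<forall>m. h m 0 = 0" "\<forall>m a b. h m (a+b) = h m a + h m b"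
  shows "(\<Sum>m\<in>Poly_Mapping.keys (P+Q). h m (Poly_Mapping.lookup (P+Q) m)) =
     (\<Sum>m\<in>Poly_Mapping.keys P. h m (Poly_Mapping.lookup P m)) + (\<Sum>m\<in>Poly_Mapping.keys Q. h m (Poly_Mapping.lookup Q m))"
proof -
  let ?S = "Poly_Mapping.keys P \<union> Poly_Mapping.keys Q"
  have "(\<Sum>m\<in>Poly_Mapping.keys (P+Q). h m (Poly_Mapping.lookup (P+Q) m)) = (\<Sum>m\<in>?S. h m (Poly_Mapping.lookup (P+Q) m))"
    by (rule lin_ext_superset) (use assms keys_add[of P Q] in auto)
  also have "\<dots> = (\<Sum>m\<in>?S. h m (Poly_Mapping.lookup P m)) + (\<Sum>m\<in>?S. h m (Poly_Mapping.lookup Q m))"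
    by (simp add: lookup_add assms sum.distrib)
  also have "\<dots> = (\<Sum>m\<in>Poly_Mapping.keys P. h m (Poly_Mapping.lookup P m)) + (\<Sum>m\<in>Poly_Mapping.keys Q. h m (Poly_Mapping.lookup Q m))"
    using lin_ext_superset[of h ?S P] lin_ext_superset[of h ?S Q] assms(1) by auto
  finally show ?thesis .
qed

lemma lin_ext_single:
  assumes "\<forall>m. h m 0 = 0"
  shows "(\<Sum>k\<in>Poly_Mapping.keys (Poly_Mapping.single m a). h k (Poly_Mapping.lookup (Poly_Mapping.single m a) k)) = h m a"
  using assms by simp

lemma additive_ext:
  fixes F G :: "('k \<Rightarrow>\<^sub>0 'b::comm_monoid_add) \<Rightarrow> 'c::ab_group_add"
  assumes "\<And>x y. F (x+y) = F x + F y" "\<And>x y. G (x+y) = G x + G y"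
    "\<And>m a. F (Poly_Mapping.single m a) = G (Poly_Mapping.single m a)"
  shows "F P = G P"
proof -
  have F0: "F 0 = 0" using assms(1)[of 0 0] by simp
  have G0: "G 0 = 0" using assms(2)[of 0 0] by simp
  have "\<And>S. F (\<Sum>m\<in>S. Poly_Mapping.single m (Poly_Mapping.lookup P m)) = G (\<Sum>m\<in>S. Poly_Mapping.single m (Poly_Mapping.lookup P m))"
  proof -
    fix S :: "'k set"
    show "F (\<Sum>m\<in>S. Poly_Mapping.single m (Poly_Mapping.lookup P m)) = G (\<Sum>m\<in>S. Poly_Mapping.single m (Poly_Mapping.lookup P m))"
      by (induction S rule: infinite_finite_induct) (auto simp: F0 G0 assms)
  qed
  then show ?thesis using mpoly_expand[of P] by metis
qed

lemma msubst_add: "msubst g (P + Q) = msubst g P + msubst g Q"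
  unfolding msubst_def by (rule lin_ext_add) (simp_all add: mconst_def single_add distrib_right)

lemma msubst_single: "msubst g (Poly_Mapping.single m a) = mconst a * (\<Prod>i\<in>UNIV. g i ^ Poly_Mapping.lookup m i)"
  unfolding msubst_def by (simp add: mconst_def)

lemma mconst_0[simp]: "mconst 0 = 0" by (simp add: mconst_def)
lemma mconst_1[simp]: "mconst 1 = 1" by (simp add: mconst_def)
lemma mconst_mult: "mconst (a*b) = mconst a * mconst b" by (simp add: mconst_def mult_single)
lemma mconst_mult_single: "mconst c * Poly_Mapping.single m a = Poly_Mapping.single m (c*a)"
  by (simp add: mconst_def mult_single)

lemma msubst_mconst[simp]: "msubst g (mconst c) = mconst c"
  unfolding mconst_def[of c] msubst_single by (simp add: mconst_def)

lemma msubst_0[simp]: "msubst g 0 = 0"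
  using msubst_mconst[of g 0] by simp
lemma msubst_1[simp]: "msubst g 1 = 1"
  using msubst_mconst[of g 1] by simp

lemma prod_delta_pow: "(\<Prod>j\<in>(UNIV::'n::finite set). (g j::'b::comm_monoid_mult) ^ Poly_Mapping.lookup (ev i) j) = g i"
proof -
  have "(\<Prod>j\<in>(UNIV::'n set). g j ^ Poly_Mapping.lookup (ev i) j) = (\<Prod>j\<in>(UNIV::'n set). if i = j then g j else 1)"
    by (rule prod.cong) (auto simp: lookup_single when_def)
  then show ?thesis by simp
qed

lemma msubst_mvar[simp]: "msubst g (mvar i) = g i"
  unfolding mvar_def msubst_single using prod_delta_pow[of g i] by simp

lemma msubst_uminus: "msubst g (- P) = - msubst g P"
  using msubst_add[of g P "-P"] by (simp add: add_eq_0_iff)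

lemma msubst_sum: "msubst g (sum F S) = (\<Sum>x\<in>S. msubst g (F x))"
  by (induction S rule: infinite_finite_induct) (auto simp: msubst_add)

lemma mpderiv_add: "mpderiv i (P + Q) = mpderiv i P + mpderiv i Q"
  unfolding mpderiv_def by (rule lin_ext_add) (simp_all add: single_add distrib_left)

lemma mpderiv_single: "mpderiv i (Poly_Mapping.single m a) = Poly_Mapping.single (m - ev i) (of_nat (Poly_Mapping.lookup m i) * a)"
  unfolding mpderiv_def by simp

lemma mpderiv_mconst[simp]: "mpderiv i (mconst c) = 0"
  unfolding mconst_def mpderiv_single by simp

lemma mpderiv_mvar: "mpderiv k (mvar i) = (if k = i then 1 else 0)"
  unfolding mvar_def mpderiv_single by (auto simp: lookup_single when_def)

lemma mpderiv_0[simp]: "mpderiv k 0 = 0"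
  using mpderiv_mconst[of k 0] by simp

lemma single_pow: "Poly_Mapping.single (ev i) (1::'a::comm_semiring_1) ^ k = Poly_Mapping.single (Poly_Mapping.single i k) 1"
  by (induction k) (simp_all add: mult_single single_add[symmetric] add.commute)

lemma prod_single_pow:
  fixes f :: "'n \<Rightarrow> nat"
  shows "(\<Prod>i\<in>S. Poly_Mapping.single (ev i) (1::'a::comm_semiring_1) ^ f i) = Poly_Mapping.single (\<Sum>i\<in>S. Poly_Mapping.single i (f i)) 1"
  by (induction S rule: infinite_finite_induct) (simp_all add: single_pow[simplified] mult_single)

lemma single_mono_expand:
  "Poly_Mapping.single (m::'n::finite \<Rightarrow>\<^sub>0 nat) (a::'a::comm_ring_1) = mconst a * (\<Prod>i\<in>UNIV. mvar i ^ Poly_Mapping.lookup m i)"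
  unfolding mvar_def prod_single_pow mconst_mult_single
  using pm_expand_finite[of m] by simp

lemma mpoly_induct[case_names const var add mult]:
  fixes P :: "('n::finite, 'a::comm_ring_1) mpoly"
  assumes C: "\<And>c. Q (mconst c)" and V: "\<And>i. Q (mvar i)"
    and A: "\<And>p q. Q p \<Longrightarrow> Q q \<Longrightarrow> Q (p+q)" and M: "\<And>p q. Q p \<Longrightarrow> Q q \<Longrightarrow> Q (p*q)"
  shows "Q P"
proof -
  have Q0: "Q 0" using C[of 0] by simp
  have Q1: "Q 1" using C[of 1] by simp
  have pw: "Q (p ^ k)" if "Q p" for p and k :: nat
    by (induction k) (simp_all add: Q1 M that)
  have pr: "Q (\<Prod>i\<in>S. mvar i ^ f i)" for S :: "'n set" and f
    by (induction S rule: infinite_finite_induct) (simp_all add: Q1 M pw V)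
  have mono: "Q (Poly_Mapping.single m a)" for m a
    unfolding single_mono_expand by (rule M[OF C pr])
  have "Q (\<Sum>m\<in>S. Poly_Mapping.single m (Poly_Mapping.lookup P m))" for S
    by (induction S rule: infinite_finite_induct) (simp_all add: Q0 A mono)
  then show ?thesis using mpoly_expand[of P] by metis
qed

lemma lookup_ev: "Poly_Mapping.lookup (ev i) j = (if i = j then 1 else 0)"
  by (simp add: lookup_single when_def)

lemma lookup_ev'[simp]: "Poly_Mapping.lookup (Poly_Mapping.single i (Suc 0)) j = (if i = j then 1 else 0)"
  by (simp add: lookup_single when_def)

lemma prod_if_pow[simp]: "(\<Prod>j\<in>(UNIV::'n::finite set). (g j::'b::comm_monoid_mult) ^ (if i = j then 1 else 0)) = g i"
proof -
  have "(\<Prod>j\<in>(UNIV::'n set). g j ^ (if i = j then 1 else 0)) = (\<Prod>j\<in>(UNIV::'n set). if i = j then g j else 1)"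
    by (rule prod.cong) auto
  then show ?thesis by simp
qed

lemma prod_shift:
  fixes g :: "'n::finite \<Rightarrow> 'b::comm_monoid_mult"
  shows "(\<Prod>j\<in>UNIV. g j ^ Poly_Mapping.lookup (ev i + m) j) = g i * (\<Prod>j\<in>UNIV. g j ^ Poly_Mapping.lookup m j)"
proof -
  have "(\<Prod>j\<in>UNIV. g j ^ Poly_Mapping.lookup (ev i + m) j) = (\<Prod>j\<in>UNIV. g j ^ Poly_Mapping.lookup (ev i) j * g j ^ Poly_Mapping.lookup m j)"
    by (simp add: lookup_add power_add)
  also have "\<dots> = g i * (\<Prod>j\<in>UNIV. g j ^ Poly_Mapping.lookup m j)"
    by (simp add: prod.distrib prod_delta_pow[simplified])
  finally show ?thesis .
qed

lemma msubst_mult: "msubst g (P * Q) = msubst g P * msubst g Q"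
proof (induction P arbitrary: Q rule: mpoly_induct)
  case (const c)
  show ?case
    by (rule additive_ext[where F="\<lambda>Q. msubst g (mconst c * Q)" and G="\<lambda>Q. msubst g (mconst c) * msubst g Q"])
       (simp_all add: distrib_left msubst_add mconst_mult_single msubst_single mconst_mult mult.assoc)
next
  case (var i)
  show ?case
    by (rule additive_ext[where F="\<lambda>Q. msubst g (mvar i * Q)" and G="\<lambda>Q. msubst g (mvar i) * msubst g Q"])
       (simp_all add: distrib_left msubst_add mvar_def mult_single msubst_single prod_shift[simplified] mult.left_commute)
next
  case (add p q)
  then show ?case by (simp add: distrib_right msubst_add)
next
  case (mult p q)
  then show ?case by (simp add: mult.assoc)
qed

lemma msubst_prod: "msubst g (prod F S) = (\<Prod>x\<in>S. msubst g (F x))"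
  by (induction S rule: infinite_finite_induct) (auto simp: msubst_mult)

lemma msubst_of_int: "msubst g (of_int z) = of_int z"
  using msubst_mconst[of g "of_int z"] by (simp add: mconst_def)

lemma ev_add_minus_self: "ev i + m - ev i = (m :: 'n \<Rightarrow>\<^sub>0 nat)"
  by (rule poly_mapping_eqI) (simp add: lookup_add lookup_minus)

lemma ev_add_minus2:
  assumes "Poly_Mapping.lookup m i > 0"
  shows "Poly_Mapping.single i (Suc 0) + (m - Poly_Mapping.single i (Suc 0)) = (m :: 'n \<Rightarrow>\<^sub>0 nat)"
  by (rule poly_mapping_eqI) (use assms in \<open>auto simp: lookup_add lookup_minus\<close>)

lemma ev_add_minus:
  assumes "k \<noteq> i \<or> Poly_Mapping.lookup m k > 0"
  shows "Poly_Mapping.single i (Suc 0) + m - Poly_Mapping.single k (Suc 0) = Poly_Mapping.single i (Suc 0) + (m - Poly_Mapping.single k (Suc 0) :: 'n \<Rightarrow>\<^sub>0 nat)"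
  by (rule poly_mapping_eqI) (use assms in \<open>auto simp: lookup_add lookup_minus lookup_ev\<close>)

lemma var_single: "mpderiv k (mvar i * Poly_Mapping.single m a) = mpderiv k (mvar i) * Poly_Mapping.single m a + mvar i * mpderiv k (Poly_Mapping.single (m::'n::finite \<Rightarrow>\<^sub>0 nat) (a::'a::comm_ring_1))"
proof (cases "k = i")
  case True
  show ?thesis
  proof (cases "Poly_Mapping.lookup m i > 0")
    case True
    have "mvar i * Poly_Mapping.single m a = Poly_Mapping.single (Poly_Mapping.single i (Suc 0) + m) a"
      by (simp add: mvar_def mult_single)
    then show ?thesis using True \<open>k = i\<close>
      by (simp add: mvar_def mult_single mpderiv_single mpderiv_mvar ev_add_minus2 ev_add_minus_self[simplified] lookup_add
            single_add[symmetric] distrib_right add.commute)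
  next
    case False
    then show ?thesis using \<open>k = i\<close>
      by (simp add: mvar_def mult_single mpderiv_single mpderiv_mvar ev_add_minus_self[simplified] lookup_add)
  qed
next
  case False
  show ?thesis
  proof (cases "Poly_Mapping.lookup m k > 0")
    case True
    have e: "Poly_Mapping.single i (Suc 0) + m - Poly_Mapping.single k (Suc 0) = Poly_Mapping.single i (Suc 0) + (m - Poly_Mapping.single k (Suc 0))"
      using ev_add_minus[of k i m] False by simp
    show ?thesis using False
      by (simp add: mvar_def mult_single mpderiv_single mpderiv_mvar lookup_add e)
  next
    case F2: False
    then show ?thesis using False
      by (simp add: mvar_def mult_single mpderiv_single mpderiv_mvar lookup_add)
  qed
qed

lemma mpderiv_mult:
  fixes P :: "('n::finite, 'a::comm_ring_1) mpoly"
  shows "mpderiv k (P * R) = mpderiv k P * R + P * mpderiv k R"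
proof (induction P arbitrary: R rule: mpoly_induct)
  case (const c)
  have s: "mpderiv k (mconst c * Poly_Mapping.single m a) = mpderiv k (mconst c) * Poly_Mapping.single m a + mconst c * mpderiv k (Poly_Mapping.single m a)" for m a
    by (simp add: mconst_mult_single mpderiv_single mult.left_commute)
  show ?case
    by (rule additive_ext[where F="\<lambda>Q. mpderiv k (mconst c * Q)" and G="\<lambda>Q. mpderiv k (mconst c) * Q + mconst c * mpderiv k Q"])
       (simp_all only: s distrib_left mpderiv_add distrib_right add_ac)
next
  case (var i)
  have s: "mpderiv k (mvar i * Poly_Mapping.single m a) = mpderiv k (mvar i) * Poly_Mapping.single m a + mvar i * mpderiv k (Poly_Mapping.single m a)" for m a
    by (rule var_single)
  show ?case
    by (rule additive_ext[where F="\<lambda>Q. mpderiv k (mvar i * Q)" and G="\<lambda>Q. mpderiv k (mvar i) * Q + mvar i * mpderiv k Q"])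
       (simp_all only: s distrib_left mpderiv_add distrib_right add_ac)
next
  case (add p q)
  show ?case using add.IH(1)[of R] add.IH(2)[of R] by (simp add: distrib_right mpderiv_add)
next
  case (mult p q)
  have "mpderiv k (p * q * R) = mpderiv k (p * (q * R))" by (simp add: mult.assoc)
  also have "\<dots> = mpderiv k p * (q * R) + p * (mpderiv k q * R + q * mpderiv k R)"
    using mult.IH(1)[of "q*R"] mult.IH(2)[of R] by simp
  also have "\<dots> = (mpderiv k p * q + p * mpderiv k q) * R + p * q * mpderiv k R"
    by (simp add: algebra_simps)
  finally show ?case using mult.IH(1)[of q] by simp
qed

lemma mpderiv_sum: "mpderiv k (sum F S) = (\<Sum>x\<in>S. mpderiv k (F x))"
  by (induction S rule: infinite_finite_induct) (auto simp: mpderiv_add)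

lemma chain_rule:
  fixes P :: "('n::finite, 'a::comm_ring_1) mpoly"
  shows "mpderiv k (msubst g P) = (\<Sum>j\<in>UNIV. msubst g (mpderiv j P) * mpderiv k (g j))"
proof (induction P rule: mpoly_induct)
  case (const c)
  then show ?case by simp
next
  case (var i)
  have "(\<Sum>j\<in>UNIV. msubst g (mpderiv j (mvar i)) * mpderiv k (g j)) = (\<Sum>j\<in>UNIV. if j = i then mpderiv k (g j) else 0)"
    by (rule sum.cong) (auto simp: mpderiv_mvar)
  then show ?case by simp
next
  case (add p q)
  then show ?case by (simp add: msubst_add mpderiv_add distrib_right sum.distrib)
next
  case (mult p q)
  then show ?case
    by (simp add: msubst_mult mpderiv_mult msubst_add distrib_right sum.distrib sum_distrib_left sum_distrib_right algebra_simps)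
qed

lemma msubst_det: "msubst F (det A) = det (\<chi> i j. msubst F (A$i$j))"
  unfolding det_def by (simp add: msubst_sum msubst_mult msubst_of_int msubst_prod)

lemma jac_chain: "jac (\<lambda>i. msubst F (H i)) = msubst F (jac H) * jac F"
proof -
  have "(\<chi> i k. mpderiv k (msubst F (H i))) = (\<chi> i j. msubst F (mpderiv j (H i))) ** (\<chi> j k. mpderiv k (F j))"
    by (simp add: vec_eq_iff matrix_matrix_mult_def chain_rule)
  then show ?thesis unfolding jac_def by (simp add: det_mul msubst_det)
qed

lemma jac_mvar: "jac (\<lambda>i. mvar i) = (1 :: ('n::finite,'a::comm_ring_1) mpoly)"
proof -
  have "(\<chi> i k. mpderiv k (mvar i :: ('n,'a) mpoly)) = mat 1"
    by (simp add: vec_eq_iff mat_def mpderiv_mvar)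
  then show ?thesis unfolding jac_def by simp
qed

lemma det_row_replace:
  fixes a :: "'n::finite \<Rightarrow> 'a::comm_ring_1"
  shows "det (\<chi> j k. if j = i then a k else (if j = k then 1 else 0)) = a i"
proof -
  let ?M = "(\<chi> j k. if j = i then a k else (if j = k then 1 else 0)) :: 'a^'n^'n"
  have z: "(\<Prod>j\<in>UNIV. ?M$j$p j) = 0" if p: "p permutes UNIV" "p \<noteq> id" for p
  proof -
    have "\<exists>j. j \<noteq> i \<and> p j \<noteq> j"
    proof (rule ccontr)
      assume "\<not> ?thesis"
      then have fix_: "\<And>j. j \<noteq> i \<Longrightarrow> p j = j" by blast
      have "p i = i"
      proof (rule ccontr)
        assume "p i \<noteq> i"
        then have "p (p i) = p i" using fix_ by blast
        then have "p i = i" using permutes_inj[OF p(1)] by (simp add: inj_eq)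
        with \<open>p i \<noteq> i\<close> show False by simp
      qed
      then have "p = id" using fix_ by (metis eq_id_iff)
      with p(2) show False by simp
    qed
    then obtain j where "j \<noteq> i" "p j \<noteq> j" by blast
    then have "?M$j$p j = 0" by simp
    then show ?thesis by (meson UNIV_I finite_class.finite_UNIV prod_zero)
  qed
  have "det ?M = (\<Sum>p\<in>{p. p permutes (UNIV::'n set)}. if p = id then of_int (sign p) * (\<Prod>j\<in>UNIV. ?M$j$p j) else 0)"
    unfolding det_def by (rule sum.cong) (use z in \<open>auto simp: id_def\<close>)
  also have "\<dots> = of_int (sign (id::'n\<Rightarrow>'n)) * (\<Prod>j\<in>UNIV. ?M$j$id j)"
    by (simp only: sum.delta finite_permutations finite_class.finite_UNIV mem_Collect_eq permutes_id if_True)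
  also have "\<dots> = (\<Prod>j\<in>UNIV. if j = i then a i else 1)"
  proof -
    have "\<And>j. ?M$j$id j = (if j = i then a i else 1)" by auto
    then show ?thesis by (simp only: sign_id of_int_1 mult_1)
  qed
  also have "\<dots> = a i" by simp
  finally show ?thesis .
qed

lemma jac_row: "jac ((\<lambda>j. mvar j)(i := r)) = mpderiv i (r :: ('n::finite,'a::comm_ring_1) mpoly)"
proof -
  have "(\<chi> j k. mpderiv k (((\<lambda>j. mvar j)(i := r)) j)) = (\<chi> j k. if j = i then mpderiv k r else (if j = k then 1 else 0))"
    by (simp add: vec_eq_iff mpderiv_mvar)
  then show ?thesis unfolding jac_def using det_row_replace[of i "\<lambda>k. mpderiv k r"] by simp
qed

definition wt :: "('n::finite \<Rightarrow> real) \<Rightarrow> ('n \<Rightarrow>\<^sub>0 nat) \<Rightarrow> real" where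
  "wt w m = (\<Sum>i\<in>UNIV. w i * real (Poly_Mapping.lookup m i))"

definition Bd :: "('n::finite \<Rightarrow> real) \<Rightarrow> ('n, 'a::zero) mpoly \<Rightarrow> real \<Rightarrow> bool" where
  "Bd w P c = (\<forall>m\<in>Poly_Mapping.keys P. wt w m \<le> c)"

lemma wdeg_alt: "P \<noteq> 0 \<Longrightarrow> wdeg w P = Max ((\<lambda>m. ereal (wt w m)) ` Poly_Mapping.keys P)"
  unfolding wdeg_def wt_def by simp

lemma keys_nonempty: "P \<noteq> 0 \<Longrightarrow> Poly_Mapping.keys P \<noteq> {}"
  by (metis in_keys_iff poly_mapping_eqI lookup_zero equals0I)

lemma wdeg_le_iff: "wdeg w P \<le> ereal c \<longleftrightarrow> Bd w P c"
proof (cases "P = 0")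
  case True then show ?thesis by (simp add: wdeg_def Bd_def)
next
  case False
  then show ?thesis unfolding wdeg_alt[OF False] Bd_def
    by (subst Max_le_iff) (auto simp: keys_nonempty)
qed

lemma wdeg_ge: "m \<in> Poly_Mapping.keys P \<Longrightarrow> ereal (wt w m) \<le> wdeg w P"
  by (subst wdeg_alt) (auto intro: Max_ge)

lemma wdeg_attained: "P \<noteq> 0 \<Longrightarrow> \<exists>m\<in>Poly_Mapping.keys P. wdeg w P = ereal (wt w m)"
proof -
  assume P: "P \<noteq> 0"
  have "wdeg w P \<in> (\<lambda>m. ereal (wt w m)) ` Poly_Mapping.keys P"
    unfolding wdeg_alt[OF P] by (rule Max_in) (auto simp: keys_nonempty P)
  then show ?thesis by auto
qed

lemma Bd_wdeg: "P \<noteq> 0 \<Longrightarrow> Bd w P (real_of_ereal (wdeg w P)) \<and> wdeg w P = ereal (real_of_ereal (wdeg w P))"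
proof -
  assume P: "P \<noteq> 0"
  then obtain m where "wdeg w P = ereal (wt w m)" by (meson wdeg_attained)
  then show ?thesis using wdeg_le_iff[of w P "wt w m"] by simp
qed

lemma wt_add: "wt w (a + b) = wt w a + wt w b"
  by (simp add: wt_def lookup_add distrib_left sum.distrib)

lemma wt_zero[simp]: "wt w 0 = 0"
  by (simp add: wt_def)

lemma Bd_0[simp]: "Bd w 0 c" by (simp add: Bd_def)

lemma Bd_add: "Bd w P c \<Longrightarrow> Bd w Q c \<Longrightarrow> Bd w (P + Q) c"
  unfolding Bd_def using keys_add[of P Q] by blast

lemma Bd_mono: "Bd w P a \<Longrightarrow> a \<le> b \<Longrightarrow> Bd w P b"
  unfolding Bd_def by force

lemma Bd_mult: "Bd w P a \<Longrightarrow> Bd w Q b \<Longrightarrow> Bd w (P * Q) (a + b)"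
  unfolding Bd_def using keys_mult[of P Q] by (force simp: wt_add intro: add_mono)

lemma Bd_single: "wt w m \<le> c \<Longrightarrow> Bd w (Poly_Mapping.single m a) c"
  by (simp add: Bd_def)

lemma Bd_mconst: "Bd w (mconst a) 0"
  unfolding mconst_def by (rule Bd_single) simp

lemma Bd_one: "Bd w (1::('n::finite,'a::zero_neq_one) mpoly) 0"
  by (simp add: Bd_def)

lemma Bd_sum: "(\<And>x. x \<in> S \<Longrightarrow> Bd w (F x) c) \<Longrightarrow> Bd w (sum F S) c"
  by (induction S rule: infinite_finite_induct) (auto intro: Bd_add)

lemma Bd_prod: "(\<And>x. x \<in> S \<Longrightarrow> Bd w (F x) (c x)) \<Longrightarrow> Bd w (prod F S) (sum c S)"
  by (induction S rule: infinite_finite_induct) (auto intro: Bd_mult Bd_one)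

lemma Bd_pow: "Bd w P a \<Longrightarrow> Bd w (P ^ n) (real n * a)"
proof (induction n)
  case 0 then show ?case by (simp add: Bd_one)
next
  case (Suc n)
  then have "Bd w (P * P ^ n) (a + real n * a)" by (intro Bd_mult) auto
  then show ?case by (simp add: algebra_simps)
qed

lemma Bd_msubst:
  assumes F: "\<And>j. Bd w (F j) (d j)" and R: "Bd d R c"
  shows "Bd w (msubst F R) c"
  unfolding msubst_def
proof (rule Bd_sum)
  fix m assume m: "m \<in> Poly_Mapping.keys R"
  have p: "Bd w (\<Prod>i\<in>UNIV. F i ^ Poly_Mapping.lookup m i) (\<Sum>i\<in>UNIV. real (Poly_Mapping.lookup m i) * d i)"
    by (rule Bd_prod) (rule Bd_pow[OF F])
  have "Bd w (mconst (Poly_Mapping.lookup R m) * (\<Prod>i\<in>UNIV. F i ^ Poly_Mapping.lookup m i))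
          (0 + (\<Sum>i\<in>UNIV. real (Poly_Mapping.lookup m i) * d i))"
    by (rule Bd_mult[OF Bd_mconst p])
  moreover have "0 + (\<Sum>i\<in>UNIV. real (Poly_Mapping.lookup m i) * d i) = wt d m"
    by (simp add: wt_def mult.commute)
  moreover have "wt d m \<le> c" using R m by (simp add: Bd_def)
  ultimately show "Bd w (mconst (Poly_Mapping.lookup R m) * (\<Prod>i\<in>UNIV. F i ^ Poly_Mapping.lookup m i)) c"
    using Bd_mono by fastforce
qed

lemma wt_minus_ev:
  assumes "Poly_Mapping.lookup m i > 0"
  shows "wt w (m - ev i) = wt w m - w i"
proof -
  have "wt w (m - ev i) = (\<Sum>j\<in>UNIV. w j * real (Poly_Mapping.lookup m j) - (if j = i then w j else 0))"
    unfolding wt_def by (rule sum.cong) (use assms in \<open>auto simp: lookup_minus of_nat_diff algebra_simps\<close>)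
  also have "\<dots> = wt w m - w i"
    by (simp add: sum_subtractf wt_def)
  finally show ?thesis .
qed

lemma Bd_mpderiv:
  assumes "Bd w P c"
  shows "Bd w (mpderiv i P) (c - w i)"
  unfolding mpderiv_def
proof (rule Bd_sum)
  fix m assume m: "m \<in> Poly_Mapping.keys P"
  show "Bd w (Poly_Mapping.single (m - ev i) (of_nat (Poly_Mapping.lookup m i) * Poly_Mapping.lookup P m)) (c - w i)"
  proof (cases "Poly_Mapping.lookup m i > 0")
    case True
    then show ?thesis using assms m wt_minus_ev[OF True, of w] by (intro Bd_single) (auto simp: Bd_def)
  next
    case False
    then show ?thesis by simp
  qed
qed

lemma lookup_mpderiv_at:
  assumes "Poly_Mapping.lookup m i > 0"
  shows "Poly_Mapping.lookup (mpderiv i P) (m - ev i) = of_nat (Poly_Mapping.lookup m i) * Poly_Mapping.lookup P m"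
proof -
  have "Poly_Mapping.lookup (mpderiv i P) (m - ev i) =
     (\<Sum>m'\<in>Poly_Mapping.keys P. if m' - ev i = m - ev i then of_nat (Poly_Mapping.lookup m' i) * Poly_Mapping.lookup P m' else 0)"
    unfolding mpderiv_def by (simp add: lookup_sum lookup_single when_def)
  also have "\<dots> = (\<Sum>m'\<in>Poly_Mapping.keys P. if m' = m then of_nat (Poly_Mapping.lookup m i) * Poly_Mapping.lookup P m else 0)"
  proof (rule sum.cong)
    fix m' assume "m' \<in> Poly_Mapping.keys P"
    show "(if m' - ev i = m - ev i then of_nat (Poly_Mapping.lookup m' i) * Poly_Mapping.lookup P m' else 0) =
          (if m' = m then of_nat (Poly_Mapping.lookup m i) * Poly_Mapping.lookup P m else 0)"
    proof (cases "Poly_Mapping.lookup m' i > 0 \<and> m' - ev i = m - ev i")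
      case True
      have "m' = m"
      proof (rule poly_mapping_eqI)
        fix j
        have "Poly_Mapping.lookup (m' - ev i) j = Poly_Mapping.lookup (m - ev i) j" using True by simp
        then show "Poly_Mapping.lookup m' j = Poly_Mapping.lookup m j"
          using True assms by (cases "j = i") (auto simp: lookup_minus)
      qed
      then show ?thesis by simp
    next
      case False
      then show ?thesis using assms by auto
    qed
  qed simp
  also have "\<dots> = of_nat (Poly_Mapping.lookup m i) * Poly_Mapping.lookup P m"
    by (simp add: in_keys_iff)
  finally show ?thesis .
qed

lemma wt_pos:
  assumes "\<forall>i. w i > 0" "m \<noteq> 0"
  shows "wt w m > 0"
proof -
  obtain j where j: "Poly_Mapping.lookup m j \<noteq> 0"
    using assms(2) by (metis lookup_zero poly_mapping_eqI)
  show ?thesis unfolding wt_def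
    by (rule sum_pos2[where i=j]) (use assms(1) j in \<open>auto, metis less_imp_le mult_nonneg_nonneg of_nat_0_le_iff\<close>)
qed

lemma wt_ev: "wt d (ev k) = d k"
proof -
  have "wt d (ev k) = (\<Sum>i\<in>UNIV. if k = i then d i else 0)"
    unfolding wt_def by (rule sum.cong) auto
  then show ?thesis by simp
qed

lemma single_ne0: "a \<noteq> 0 \<Longrightarrow> Poly_Mapping.single m a \<noteq> 0"
  by (metis lookup_single_eq lookup_zero)

lemma wdeg_single: "a \<noteq> 0 \<Longrightarrow> wdeg w (Poly_Mapping.single m a) = ereal (wt w m)"
  by (subst wdeg_alt) (auto simp: single_ne0)

lemma mvar_ne0: "mvar k \<noteq> (0::('n::finite,'a::comm_ring_1) mpoly)"
  unfolding mvar_def by (rule single_ne0) simp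

lemma mconst_ne_mvar: "mconst c \<noteq> (mvar k :: ('n::finite,'a::comm_ring_1) mpoly)"
proof
  assume "mconst c = mvar k"
  then have "Poly_Mapping.lookup (mconst c :: ('n,'a) mpoly) (ev k) = Poly_Mapping.lookup (mvar k :: ('n,'a) mpoly) (ev k)" by simp
  moreover have "(0::'n \<Rightarrow>\<^sub>0 nat) \<noteq> ev k"
    by (metis lookup_single_eq lookup_zero one_neq_zero)
  ultimately show False by (simp add: mconst_def mvar_def lookup_single when_def)
qed

lemma ereal_sub_le: "x \<le> ereal a \<Longrightarrow> x - ereal p \<le> ereal (a - p)"
  by (cases x) auto

theorem lemma5:
  fixes w :: "'n::finite \<Rightarrow> real"
    and f g :: "'n \<Rightarrow> ('n, 'a::{alg_closed_field, field_char_0}) mpoly"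
    and lam :: 'a
  assumes w_pos: "\<forall>i. w i > 0"
    and inv1: "\<forall>i. msubst g (f i) = mvar i"
    and inv2: "\<forall>i. msubst f (g i) = mvar i"
    and jac_f: "jac f = mconst lam"
  shows "\<exists>i. deriv_deg (\<lambda>k. real_of_ereal (wdeg w (f k))) (\<lambda>P. jac (g(i := P)))
               \<ge> deriv_deg w (\<lambda>P. mconst (inverse lam) * mpderiv i P)
           \<and> deriv_deg w (\<lambda>P. mconst (inverse lam) * mpderiv i P) = - ereal (w i)"
proof -
  define d where "d = (\<lambda>k. real_of_ereal (wdeg w (f k)))"
  have fne: "f k \<noteq> 0" for k
  proof
    assume "f k = 0"
    then have "mvar k = (0::('n,'a) mpoly)" using inv1 by (metis msubst_0)
    then show False using mvar_ne0 by blast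
  qed
  have Bf: "Bd w (f j) (d j)" for j
    using Bd_wdeg[OF fne[of j], of w] unfolding d_def by blast
  have lam: "lam \<noteq> 0"
  proof
    assume "lam = 0"
    have "jac (\<lambda>i. msubst g (f i)) = msubst g (jac f) * jac g" by (rule jac_chain)
    also have "(\<lambda>i. msubst g (f i)) = (\<lambda>i. mvar i)" using inv1 by auto
    moreover have "jac (\<lambda>i. mvar i) = (1::('n,'a) mpoly)" by (rule jac_mvar)
    ultimately have "1 = mconst lam * jac g" using jac_f by simp
    with \<open>lam = 0\<close> show False by simp
  qed
  obtain k0 :: 'n where True by simp
  obtain m where m: "m \<in> Poly_Mapping.keys (f k0)" "wdeg w (f k0) = ereal (wt w m)"
    using wdeg_attained[OF fne[of k0]] by blast
  have "m \<noteq> 0"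
  proof
    assume "m = 0"
    then have "Bd w (f k0) 0" using m(2) wdeg_le_iff[of w "f k0" 0] by simp
    then have keys0: "\<And>m'. m' \<in> Poly_Mapping.keys (f k0) \<Longrightarrow> m' = 0"
      using wt_pos[OF w_pos] unfolding Bd_def by force
    have "f k0 = mconst (Poly_Mapping.lookup (f k0) 0)"
    proof (rule poly_mapping_eqI)
      fix x
      show "Poly_Mapping.lookup (f k0) x = Poly_Mapping.lookup (mconst (Poly_Mapping.lookup (f k0) 0)) x"
        using keys0[of x] by (cases "x = 0") (auto simp: mconst_def lookup_single in_keys_iff)
    qed
    then have "msubst g (f k0) = mconst (Poly_Mapping.lookup (f k0) 0)" by (metis msubst_mconst)
    then show False using inv1 mconst_ne_mvar by metis
  qed
  then obtain i where i: "Poly_Mapping.lookup m i > 0"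
    by (metis gr0I lookup_zero poly_mapping_eqI)
  define D where "D = jac (g(i := mvar k0))"
  have "jac (\<lambda>j. msubst f ((g(i := mvar k0)) j)) = msubst f D * jac f"
    unfolding D_def by (rule jac_chain)
  also have "(\<lambda>j. msubst f ((g(i := mvar k0)) j)) = (\<lambda>j. mvar j)(i := f k0)"
    using inv2 by auto
  finally have "jac ((\<lambda>j. mvar j)(i := f k0)) = msubst f D * jac f" .
  then have key: "msubst f D * mconst lam = mpderiv i (f k0)"
    using jac_row[of i "f k0"] jac_f by metis
  have "Poly_Mapping.lookup (mpderiv i (f k0)) (m - ev i) \<noteq> 0"
    using lookup_mpderiv_at[OF i, of "f k0"] i m(1) by (simp add: in_keys_iff)
  then have mem: "m - ev i \<in> Poly_Mapping.keys (mpderiv i (f k0))" by (simp add: in_keys_iff)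
  have Dne: "D \<noteq> 0"
  proof
    assume "D = 0"
    then have "mpderiv i (f k0) = 0" using key by simp
    then show False using mem by simp
  qed
  define c where "c = real_of_ereal (wdeg d D)"
  have Dc: "Bd d D c" "wdeg d D = ereal c" using Bd_wdeg[OF Dne, of d] unfolding c_def by auto
  have "Bd w (msubst f D) c" by (rule Bd_msubst[OF Bf Dc(1)])
  then have "Bd w (msubst f D * mconst lam) (c + 0)" by (rule Bd_mult[OF _ Bd_mconst])
  then have "wt w (m - ev i) \<le> c" using mem key unfolding Bd_def by simp
  then have le: "wt w m - w i \<le> c" using wt_minus_ev[OF i] by simp
  have dk0: "d k0 = wt w m" unfolding d_def using m(2) by simp
  have wv: "wdeg d (mvar k0 :: ('n,'a) mpoly) = ereal (d k0)"
    unfolding mvar_def by (simp add: wdeg_single wt_ev[simplified])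
  have "wdeg d (jac (g(i := mvar k0))) - wdeg d (mvar k0 :: ('n,'a) mpoly) \<in>
        {wdeg d (jac (g(i := P))) - wdeg d P | P. P \<noteq> 0}"
    using mvar_ne0[of k0, where 'a='a] by (intro CollectI exI[of _ "mvar k0"]) simp
  then have ge: "deriv_deg d (\<lambda>P. jac (g(i := P))) \<ge> ereal c - ereal (d k0)"
    unfolding deriv_deg_def using Dc(2) wv D_def by (metis (no_types, lifting) Sup_upper)
  have delta: "deriv_deg w (\<lambda>P. mconst (inverse lam) * mpderiv i P) = - ereal (w i)"
    unfolding deriv_deg_def
  proof (rule Sup_eqI)
    fix y assume "y \<in> {wdeg w (mconst (inverse lam) * mpderiv i P) - wdeg w P |P. P \<noteq> 0}"
    then obtain P where P: "P \<noteq> 0" "y = wdeg w (mconst (inverse lam) * mpderiv i P) - wdeg w P" by blast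
    define p where "p = real_of_ereal (wdeg w P)"
    have Pp: "Bd w P p" "wdeg w P = ereal p" using Bd_wdeg[OF P(1), of w] unfolding p_def by auto
    have "Bd w (mconst (inverse lam) * mpderiv i P) (0 + (p - w i))"
      by (rule Bd_mult[OF Bd_mconst Bd_mpderiv[OF Pp(1)]])
    then have "Bd w (mconst (inverse lam) * mpderiv i P) (p - w i)" by simp
    then have "wdeg w (mconst (inverse lam) * mpderiv i P) \<le> ereal (p - w i)"
      by (rule wdeg_le_iff[THEN iffD2])
    then have "wdeg w (mconst (inverse lam) * mpderiv i P) - ereal p \<le> ereal (p - w i - p)" by (rule ereal_sub_le)
    then have "y \<le> ereal (p - w i - p)" using P(2) Pp(2) by simp
    then show "y \<le> - ereal (w i)" by simp
  next
    fix y assume "\<And>z. z \<in> {wdeg w (mconst (inverse lam) * mpderiv i P) - wdeg w P |P. P \<noteq> 0} \<Longrightarrow> z \<le> y"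
    moreover have "wdeg w (mconst (inverse lam) * mpderiv i (mvar i)) - wdeg w (mvar i :: ('n,'a) mpoly) \<in>
        {wdeg w (mconst (inverse lam) * mpderiv i P) - wdeg w P |P. P \<noteq> 0}"
      using mvar_ne0[of i, where 'a='a] by (intro CollectI exI[of _ "mvar i"]) simp
    moreover have "wdeg w (mconst (inverse lam) * mpderiv i (mvar i)) - wdeg w (mvar i :: ('n,'a) mpoly) = - ereal (w i)"
    proof -
      have "mconst (inverse lam) * mpderiv i (mvar i) = Poly_Mapping.single 0 (inverse lam)"
        by (simp add: mpderiv_mvar mconst_def)
      then have "wdeg w (mconst (inverse lam) * mpderiv i (mvar i)) = ereal 0"
        using lam by (simp add: wdeg_single)
      moreover have "wdeg w (mvar i :: ('n,'a) mpoly) = ereal (w i)"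
        unfolding mvar_def by (simp add: wdeg_single wt_ev[simplified])
      ultimately show ?thesis by simp
    qed
    ultimately show "- ereal (w i) \<le> y" by force
  qed
  have "c - d k0 \<ge> - w i" using le dk0 by simp
  then have "ereal c - ereal (d k0) \<ge> - ereal (w i)" by simp
  then have "- ereal (w i) \<le> deriv_deg d (\<lambda>P. jac (g(i := P)))"
    using ge by (rule order_trans)
  then have "deriv_deg d (\<lambda>P. jac (g(i := P))) \<ge> deriv_deg w (\<lambda>P. mconst (inverse lam) * mpderiv i P)"
    by (simp only: delta)
  then show ?thesis using delta unfolding d_def by blast
qed

end
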